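(* Let $p\geq 3$ be a prime, $u\in\{2,\ldots,p-1\}$ and $s$ a positive integer. Then $$\nu_{p}\big(A_{p,(p-1)(up^s-1)}(n)\big)\geq 2$$ for infinitely many $n\in\mathbb{N}$.
   Context: For an integer $m\geq 2$ and a positive integer $k$, the integers $A_{m,k}(n)$, $n\in\mathbb{N}=\{0,1,2,\ldots\}$, are defined by the formal power series identity $\prod_{i=0}^{\infty}\big(1-x^{m^{i}}\big)^{-k}=\sum_{n=0}^{\infty}A_{m,k}(n)x^{n}$. For a prime $p$, $\nu_p(n)$ denotes the $p$-adic valuation of the integer $n$, with $\nu_p(0)=+\infty$. *)

theory Defs
  imports "HOL-Computational_Algebra.Computational_Algebra" "HOL-Library.Extended_Nat"
begin

text \<open>Coefficients A_{m,k}(n) of prod_{i>=0} (1 - x^(m^i))^(-k).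
  For m >= 2 and i > n we have m^i > n, so the factor with index i is
  congruent to 1 modulo x^(n+1); hence the n-th coefficient of the infinite
  product equals the n-th coefficient of the finite product over i <= n.\<close>
definition geom :: "nat \<Rightarrow> int fps" where
  "geom a = Abs_fps (\<lambda>n. if a dvd n then 1 else 0)"

lemma geom_inverse:
  assumes "a \<ge> 1" shows "geom a * (1 - fps_X ^ a) = 1"
proof (rule fps_ext)
  fix n
  show "fps_nth (geom a * (1 - fps_X ^ a)) n = fps_nth 1 n"
    using assms
    by (auto simp: geom_def algebra_simps fps_X_power_mult_nth dvd_diff_nat dvd_minus_self
             dest: dvd_imp_le)
qed

definition A :: "nat \<Rightarrow> nat \<Rightarrow> nat \<Rightarrow> int" where
  "A m k n = fps_nth (\<Prod>i\<le>n. (geom (m ^ i)) ^ k) n"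

definition nu :: "nat \<Rightarrow> int \<Rightarrow> enat" where
  "nu p x = (if x = 0 then \<infinity> else enat (multiplicity (int p) x))"

end

theory Submission
  imports Defs
begin

definition zp :: "nat \<Rightarrow> rat \<Rightarrow> bool" where
  "zp p r \<longleftrightarrow> (\<exists>a b::int. b \<noteq> 0 \<and> coprime b (int p) \<and> r = of_int a / of_int b)"

definition pc :: "nat \<Rightarrow> nat \<Rightarrow> rat \<Rightarrow> bool" where
  "pc p k r \<longleftrightarrow> (\<exists>z. zp p z \<and> r = of_nat p ^ k * z)"

lemma zp_int[simp]: "zp p (of_int a)"
  unfolding zp_def by (rule exI[of _ a], rule exI[of _ 1]) simp

lemma zp_nat[simp]: "zp p (of_nat a)"
  using zp_int[of p "int a"] by simp

lemma zp_0[simp]: "zp p 0" and zp_1[simp]: "zp p 1"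
  using zp_int[of p 0] zp_int[of p 1] by simp_all

lemma zp_add[intro]: assumes "zp p x" "zp p y" shows "zp p (x + y)"
proof -
  obtain a b where 1: "b \<noteq> 0" "coprime b (int p)" "x = of_int a / of_int b" using assms(1) zp_def by auto
  obtain c d where 2: "d \<noteq> 0" "coprime d (int p)" "y = of_int c / of_int d" using assms(2) zp_def by auto
  have "x + y = of_int (a*d + c*b) / of_int (b*d)" using 1 2 by (simp add: field_simps)
  moreover have "b*d \<noteq> 0" "coprime (b*d) (int p)" using 1 2 by auto
  ultimately show ?thesis unfolding zp_def by blast
qed

lemma zp_mult[intro]: assumes "zp p x" "zp p y" shows "zp p (x * y)"
proof -
  obtain a b where 1: "b \<noteq> 0" "coprime b (int p)" "x = of_int a / of_int b" using assms(1) zp_def by auto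
  obtain c d where 2: "d \<noteq> 0" "coprime d (int p)" "y = of_int c / of_int d" using assms(2) zp_def by auto
  have "x * y = of_int (a*c) / of_int (b*d)" using 1 2 by (simp add: field_simps)
  moreover have "b*d \<noteq> 0" "coprime (b*d) (int p)" using 1 2 by auto
  ultimately show ?thesis unfolding zp_def by blast
qed

lemma zp_uminus[intro]: assumes "zp p x" shows "zp p (- x)"
  using zp_mult[OF zp_int[of p "-1"] assms] by simp

lemma zp_diff[intro]: assumes "zp p x" "zp p y" shows "zp p (x - y)"
  using zp_add[OF assms(1) zp_uminus[OF assms(2)]] by simp

lemma zp_sum[intro]: "(\<And>i. i \<in> S \<Longrightarrow> zp p (f i)) \<Longrightarrow> zp p (\<Sum>i\<in>S. f i)"
  by (induction S rule: infinite_finite_induct) auto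

lemma zp_prod[intro]: "(\<And>i. i \<in> S \<Longrightarrow> zp p (f i)) \<Longrightarrow> zp p (\<Prod>i\<in>S. f i)"
  by (induction S rule: infinite_finite_induct) auto

lemma zp_power[intro]: "zp p x \<Longrightarrow> zp p (x ^ k)"
  by (induction k) auto

lemma zp_inv_nat: assumes "prime p" "0 < k" "k < p" shows "zp p (1 / of_nat k)"
proof -
  have "coprime (int k) (int p)"
    using assms by (metis coprime_commute coprime_int_iff nat_dvd_not_less prime_imp_coprime)
  then show ?thesis unfolding zp_def using assms
    by (intro exI[of _ 1] exI[of _ "int k"]) auto
qed

lemma pc_zp: "pc p k r \<Longrightarrow> zp p r"
  unfolding pc_def using zp_mult zp_power zp_nat by metis

lemma pc_0[simp]: "pc p k 0"
  unfolding pc_def by (rule exI[of _ 0]) simp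

lemma pc_add[intro]: assumes "pc p k x" "pc p k y" shows "pc p k (x + y)"
proof -
  obtain z w where "zp p z" "x = of_nat p ^ k * z" "zp p w" "y = of_nat p ^ k * w" using assms pc_def by auto
  then show ?thesis unfolding pc_def by (intro exI[of _ "z + w"]) (auto simp: distrib_left)
qed

lemma pc_uminus[intro]: assumes "pc p k x" shows "pc p k (- x)"
proof -
  obtain z where "zp p z" "x = of_nat p ^ k * z" using assms pc_def by auto
  then show ?thesis unfolding pc_def by (intro exI[of _ "- z"]) auto
qed

lemma pc_diff[intro]: "pc p k x \<Longrightarrow> pc p k y \<Longrightarrow> pc p k (x - y)"
  using pc_add[of p k x "-y"] pc_uminus[of p k y] by simp

lemma pc_sum[intro]: "(\<And>i. i \<in> S \<Longrightarrow> pc p k (f i)) \<Longrightarrow> pc p k (\<Sum>i\<in>S. f i)"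
  by (induction S rule: infinite_finite_induct) auto

lemma pc_mult_zp[intro]: assumes "pc p k x" "zp p y" shows "pc p k (x * y)"
proof -
  obtain z where "zp p z" "x = of_nat p ^ k * z" using assms pc_def by auto
  then show ?thesis unfolding pc_def using assms(2) by (intro exI[of _ "z * y"]) auto
qed

lemma pc_mult_zp'[intro]: "zp p y \<Longrightarrow> pc p k x \<Longrightarrow> pc p k (y * x)"
  using pc_mult_zp[of p k x y] by (simp add: mult.commute)

lemma pc_mult[intro]: assumes "pc p k x" "pc p l y" shows "pc p (k + l) (x * y)"
proof -
  obtain z w where "zp p z" "x = of_nat p ^ k * z" "zp p w" "y = of_nat p ^ l * w" using assms pc_def by auto
  then show ?thesis unfolding pc_def by (intro exI[of _ "z * w"]) (auto simp: power_add)
qed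

lemma pc_p_times: "zp p z \<Longrightarrow> pc p 1 (of_nat p * z)"
  unfolding pc_def by auto

lemma pc_p_times2: assumes "pc p k x" shows "pc p (Suc k) (of_nat p * x)"
proof -
  obtain z where "zp p z" "x = of_nat p ^ k * z" using assms pc_def by auto
  then show ?thesis unfolding pc_def by (intro exI[of _ "z"]) auto
qed

lemma pc_mono: assumes "pc p k x" "l \<le> k" shows "pc p l x"
proof -
  obtain z where "zp p z" "x = of_nat p ^ k * z" using assms pc_def by auto
  then have "x = of_nat p ^ l * (of_nat p ^ (k - l) * z)"
    using assms(2) by (simp add: power_add[symmetric])
  moreover have "zp p (of_nat p ^ (k - l) * z)" using \<open>zp p z\<close> zp_mult zp_power zp_nat by metis
  ultimately show ?thesis unfolding pc_def by blast
qed

lemma pc_of_int: assumes "int p ^ k dvd a" shows "pc p k (of_int a)"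
proof -
  obtain c where "a = int p ^ k * c" using assms by auto
  then show ?thesis unfolding pc_def by (intro exI[of _ "of_int c"]) auto
qed

lemma pc_int_dvd: assumes "prime p" "pc p k (of_int a)" shows "int p ^ k dvd a"
proof -
  obtain z where z: "zp p z" "of_int a = of_nat p ^ k * z" using assms pc_def by auto
  obtain c b where cb: "b \<noteq> 0" "coprime b (int p)" "z = of_int c / of_int b" using z zp_def by auto
  have "of_int (a * b) = (of_int (int p ^ k * c) :: rat)" using z cb by (simp add: field_simps)
  then have "a * b = int p ^ k * c" by linarith
  then have "int p ^ k dvd a * b" by simp
  moreover have "coprime (int p ^ k) b" using cb(2) by (simp add: coprime_commute)
  ultimately show ?thesis using coprime_dvd_mult_left_iff by blast
qed

lemma zp_not_pc_rep: assumes "zp p r" "\<not> pc p 1 r" "prime p"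
  shows "\<exists>x y::int. r = of_int x / of_int y \<and> y \<noteq> 0 \<and> coprime y (int p) \<and> \<not> int p dvd x"
proof -
  obtain a b where ab: "b \<noteq> 0" "coprime b (int p)" "r = of_int a / of_int b" using assms zp_def by auto
  have "\<not> int p dvd a"
  proof
    assume "int p dvd a"
    then obtain c where "a = int p * c" by auto
    then have "r = of_nat p ^ 1 * (of_int c / of_int b)" using ab by simp
    moreover have "zp p (of_int c / of_int b)" unfolding zp_def using ab by blast
    ultimately show False using assms(2) pc_def by blast
  qed
  then show ?thesis using ab by blast
qed

definition Hq :: "nat \<Rightarrow> rat" where "Hq d = (\<Sum>k=1..d. 1 / of_nat k)"

lemma Hq_0[simp]: "Hq 0 = 0" by (simp add: Hq_def)
lemma Hq_Suc: "Hq (Suc d) = Hq d + 1 / of_nat (Suc d)" by (simp add: Hq_def)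

lemma pascal_alt:
  fixes g :: "nat \<Rightarrow> rat"
  shows "(\<Sum>i\<le>Suc u. (-1)^i * of_nat (Suc u choose i) * g i) =
         (\<Sum>i\<le>u. (-1)^i * of_nat (u choose i) * g i) - (\<Sum>i\<le>u. (-1)^i * of_nat (u choose i) * g (Suc i))"
proof -
  have 1: "(\<Sum>i\<le>Suc u. (-1)^i * of_nat (Suc u choose i) * g i) =
     g 0 + (\<Sum>i\<le>u. (-1)^(Suc i) * of_nat (Suc u choose Suc i) * g (Suc i))"
    by (subst sum.atMost_Suc_shift) simp
  have 2: "(\<Sum>i\<le>u. (-1)^i * of_nat (u choose i) * g i) = (\<Sum>i\<le>Suc u. (-1)^i * of_nat (u choose i) * g i)"
    by simp
  also have "\<dots> = g 0 + (\<Sum>i\<le>u. (-1)^(Suc i) * of_nat (u choose Suc i) * g (Suc i))"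
    by (subst sum.atMost_Suc_shift) simp
  finally have 3: "(\<Sum>i\<le>u. (-1)^i * of_nat (u choose i) * g i) = g 0 + (\<Sum>i\<le>u. (-1)^(Suc i) * of_nat (u choose Suc i) * g (Suc i))" .
  have "(\<Sum>i\<le>u. (-1)^(Suc i) * of_nat (Suc u choose Suc i) * g (Suc i)) =
        (\<Sum>i\<le>u. (-1)^(Suc i) * of_nat (u choose Suc i) * g (Suc i)) - (\<Sum>i\<le>u. (-1)^i * of_nat (u choose i) * g (Suc i))"
    unfolding sum_subtractf[symmetric] by (rule sum.cong) (simp_all add: algebra_simps)
  then show ?thesis using 1 3 by simp
qed

lemma alt_A: "(\<Sum>i\<le>u. (-1)^i * of_nat (u choose i) * (1 / of_nat (Suc i))) = (1 / of_nat (Suc u) :: rat)"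
proof -
  have e: "(-1)^i * of_nat (u choose i) * (1 / of_nat (Suc i)) = ((-1)^i * of_nat (Suc u choose Suc i) / of_nat (Suc u) :: rat)" for i
  proof -
    have "of_nat (Suc u * (u choose i)) = (of_nat ((Suc u choose Suc i) * Suc i) :: rat)"
      by (simp only: Suc_times_binomial_eq)
    then show ?thesis by (simp add: field_simps del: of_nat_Suc binomial_Suc_Suc) (simp add: algebra_simps)
  qed
  have "(\<Sum>i\<le>Suc u. (-1)^i * of_nat (Suc u choose i)) = (0::rat)"
    by (rule choose_alternating_sum) simp
  then have "1 + (\<Sum>i\<le>u. (-1)^(Suc i) * of_nat (Suc u choose Suc i)) = (0::rat)"
    by (subst (asm) sum.atMost_Suc_shift) simp
  then have s: "(\<Sum>i\<le>u. (-1)^i * of_nat (Suc u choose Suc i)) = (1::rat)"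
    by (simp add: sum_negf)
  have "(\<Sum>i\<le>u. (-1)^i * of_nat (u choose i) * (1 / of_nat (Suc i))) =
        (\<Sum>i\<le>u. (-1)^i * of_nat (Suc u choose Suc i)) / (of_nat (Suc u) :: rat)"
    unfolding sum_divide_distrib by (rule sum.cong[OF refl], rule e)
  then show ?thesis using s by simp
qed

lemma alt_B: "(\<Sum>i\<le>Suc u. (-1)^i * of_nat (Suc u choose i) * Hq i) = - 1 / of_nat (Suc u)"
proof -
  have "(\<Sum>i\<le>u. (-1)^i * of_nat (u choose i) * Hq (Suc i)) =
        (\<Sum>i\<le>u. (-1)^i * of_nat (u choose i) * Hq i) + (\<Sum>i\<le>u. (-1)^i * of_nat (u choose i) * (1 / of_nat (Suc i)))"
    by (simp add: Hq_Suc sum.distrib[symmetric] algebra_simps del: of_nat_Suc)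
  then show ?thesis using pascal_alt[of u Hq] alt_A[of u] by simp
qed

lemma alt_S0: "u \<ge> 1 \<Longrightarrow> (\<Sum>i\<le>u. (-1)^i * of_nat (u choose i) * Hq (i - 1)) = Hq (u - 1)"
proof (induction u rule: nat_induct_at_least)
  case base
  then show ?case by simp
next
  case (Suc u)
  have "(\<Sum>i\<le>Suc u. (-1)^i * of_nat (Suc u choose i) * Hq (i - 1)) =
        Hq (u - 1) - (\<Sum>i\<le>u. (-1)^i * of_nat (u choose i) * Hq i)"
    using pascal_alt[of u "\<lambda>i. Hq (i - 1)"] Suc by simp
  also have "\<dots> = Hq (u - 1) + 1 / of_nat u"
    using alt_B[of "u - 1"] Suc by simp
  also have "\<dots> = Hq u" using Suc Hq_Suc[of "u - 1"] by simp
  finally show ?case by simp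
qed

lemma alt_S1: "u \<ge> 1 \<Longrightarrow> (\<Sum>i\<le>u. (-1)^i * of_nat (u choose i) * Hq (i - 2)) = of_nat (u - 1) - of_nat (u - 1) * Hq (u - 1)"
proof (induction u rule: nat_induct_at_least)
  case base
  then show ?case by simp
next
  case (Suc u)
  have "(\<Sum>i\<le>Suc u. (-1)^i * of_nat (Suc u choose i) * Hq (i - 2)) =
        (of_nat (u - 1) - of_nat (u - 1) * Hq (u - 1)) - (\<Sum>i\<le>u. (-1)^i * of_nat (u choose i) * Hq (i - 1))"
    using pascal_alt[of u "\<lambda>i. Hq (i - 2)"] Suc by simp
  also have "\<dots> = of_nat (u - 1) - of_nat (u - 1) * Hq (u - 1) - Hq (u - 1)"
    using alt_S0[of u] Suc by simp
  also have "\<dots> = of_nat u - of_nat u * Hq u"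
    using Suc Hq_Suc[of "u - 1"] by (simp add: field_simps of_nat_diff)
  finally show ?case by simp
qed

lemma zp_Hq: assumes "prime p" "d < p" shows "zp p (Hq d)"
  unfolding Hq_def using assms by (intro zp_sum) (auto intro!: zp_inv_nat)

lemma pc_pair: assumes "prime p" "0 < j" "j < p"
  shows "pc p 1 (1 / of_nat (p - j) + 1 / of_nat j)"
proof -
  have "(1 / of_nat (p - j) + 1 / of_nat j :: rat) = of_nat p * ((1 / of_nat (p - j)) * (1 / of_nat j))"
    using assms by (simp add: field_simps of_nat_diff)
  moreover have "zp p ((1 / of_nat (p - j)) * (1 / of_nat j))"
    using assms by (intro zp_mult zp_inv_nat) auto
  ultimately show ?thesis using pc_p_times by metis
qed

lemma Hq_refl_aux: assumes "prime p" "1 \<le> j" "j \<le> p"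
  shows "pc p 1 ((Hq (p - 1) - Hq 0) - (Hq (p - j) - Hq (j - 1)))"
  using assms(2,3)
proof (induction j rule: nat_induct_at_least)
  case base
  then show ?case by simp
next
  case (Suc j)
  have p: "Hq (p - j) = Hq (p - Suc j) + 1 / of_nat (p - j)"
    using Suc Hq_Suc[of "p - Suc j"] by (simp add: Suc_diff_Suc)
  have q: "Hq (Suc j - 1) = Hq (j - 1) + 1 / of_nat j"
    using Suc Hq_Suc[of "j - 1"] by simp
  have "(Hq (p - 1) - Hq 0) - (Hq (p - Suc j) - Hq (Suc j - 1)) =
        ((Hq (p - 1) - Hq 0) - (Hq (p - j) - Hq (j - 1))) + (1 / of_nat (p - j) + 1 / of_nat j)"
    using p q by simp
  moreover have "pc p 1 (1 / of_nat (p - j) + 1 / of_nat j)"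
    using Suc assms by (intro pc_pair) auto
  moreover have "pc p 1 ((Hq (p - 1) - Hq 0) - (Hq (p - j) - Hq (j - 1)))"
    using Suc by simp
  ultimately show ?case using pc_add by metis
qed

lemma Hq_pm1: assumes "prime p" "p \<ge> 3" shows "pc p 1 (Hq (p - 1))"
proof -
  define j where "j = (p + 1) div 2"
  have odd: "odd p" using assms prime_odd_nat by auto
  then have "p - j = j - 1" "1 \<le> j" "j \<le> p" unfolding j_def by (auto elim!: oddE)
  then show ?thesis using Hq_refl_aux[OF assms(1), of j] by simp
qed

lemma Hq_refl: assumes "prime p" "p \<ge> 3" "1 \<le> j" "j \<le> p"
  shows "pc p 1 (Hq (p - j) - Hq (j - 1))"
proof -
  have "Hq (p - j) - Hq (j - 1) = Hq (p - 1) - ((Hq (p - 1) - Hq 0) - (Hq (p - j) - Hq (j - 1)))"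
    by simp
  then show ?thesis using Hq_pm1[OF assms(1,2)] Hq_refl_aux[OF assms(1,3,4)] by (metis pc_diff)
qed

definition cc :: "nat \<Rightarrow> nat \<Rightarrow> int" where "cc p d = (-1)^d * int (p - 1 choose d)"

lemma cc_0[simp]: "cc p 0 = 1" by (simp add: cc_def)

lemma cc_step: assumes "Suc d \<le> p - 1"
  shows "of_int (cc p (Suc d)) = (of_int (cc p d) :: rat) * (1 - of_nat p / of_nat (Suc d))"
proof -
  have "Suc d * (p - 1 choose Suc d) = (p - 1) * ((p - 1 - 1) choose d)"
    by (rule binomial_absorption)
  also have "\<dots> = (p - 1 - d) * (p - 1 choose d)"
    by (rule binomial_absorb_comp[symmetric])
  finally have "Suc d * (p - 1 choose Suc d) = (p - 1 - d) * (p - 1 choose d)" .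
  then have e: "(of_nat (Suc d) * of_nat (p - 1 choose Suc d) :: rat) = of_nat (p - 1 - d) * of_nat (p - 1 choose d)"
    by (metis of_nat_mult)
  have f: "of_nat (p - 1 - d) = (of_nat p - of_nat (Suc d) :: rat)" using assms by (simp add: of_nat_diff)
  have g: "(of_int (cc p (Suc d)) :: rat) * of_nat (Suc d) = - ((-1)^d) * (of_nat (Suc d) * of_nat (p - 1 choose Suc d))"
    unfolding cc_def by simp
  have h: "(of_int (cc p (Suc d)) :: rat) * of_nat (Suc d) = of_int (cc p d) * (of_nat (Suc d) - of_nat p)"
    unfolding g e f unfolding cc_def by (simp add: algebra_simps)
  have "(of_nat (Suc d) :: rat) \<noteq> 0" by simp
  then show ?thesis using h by (simp add: field_simps del: of_nat_Suc)
qed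

lemma cc_cong: assumes "prime p" "d \<le> p - 1"
  shows "pc p 2 (of_int (cc p d) - (1 - of_nat p * Hq d))"
  using assms(2)
proof (induction d)
  case 0
  then show ?case by simp
next
  case (Suc d)
  have pp: "0 < Suc d" "Suc d < p" using Suc by auto
  have z1: "zp p (1 / of_nat (Suc d))" using zp_inv_nat[OF assms(1) pp] .
  have zH: "zp p (Hq d)" using zp_Hq[OF assms(1)] Suc by auto
  have "of_int (cc p (Suc d)) - (1 - of_nat p * Hq (Suc d)) =
        (of_int (cc p d) - (1 - of_nat p * Hq d)) * (1 - of_nat p * (1 / of_nat (Suc d)))
         + of_nat p * (of_nat p * (Hq d * (1 / of_nat (Suc d))))"
    using cc_step[OF Suc.prems] Hq_Suc[of d] by (simp add: field_simps del: of_nat_Suc)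
  moreover have "pc p 2 ((of_int (cc p d) - (1 - of_nat p * Hq d)) * (1 - of_nat p * (1 / of_nat (Suc d))))"
    using Suc z1 zp_diff[OF zp_1 zp_mult[OF zp_nat z1]] by (intro pc_mult_zp) auto
  moreover have "pc p 2 (of_nat p * (of_nat p * (Hq d * (1 / of_nat (Suc d)))))"
    using pc_p_times2[OF pc_p_times[OF zp_mult[OF zH z1]]] by (simp add: numeral_2_eq_2)
  ultimately show ?case by (metis pc_add)
qed

function hq :: "nat \<Rightarrow> nat \<Rightarrow> rat" where
  "hq p m = (if m = 0 \<or> p < 2 then 0 else Hq (m mod p) + hq p (m div p))"
  by pat_completeness auto
termination by (relation "measure snd") auto

declare hq.simps[simp del]

lemma hq_0[simp]: "hq p 0 = 0" by (simp add: hq.simps)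

lemma hq_rec: "p \<ge> 2 \<Longrightarrow> hq p m = Hq (m mod p) + hq p (m div p)"
  by (cases "m = 0") (simp_all add: hq.simps[of p m])

function cz :: "nat \<Rightarrow> nat \<Rightarrow> int" where
  "cz p m = (if m = 0 \<or> p < 2 then 1 else cc p (m mod p) * cz p (m div p))"
  by pat_completeness auto
termination by (relation "measure snd") auto

declare cz.simps[simp del]

lemma cz_0[simp]: "cz p 0 = 1" by (simp add: cz.simps)

lemma cz_rec: "p \<ge> 2 \<Longrightarrow> cz p m = cc p (m mod p) * cz p (m div p)"
  by (cases "m = 0") (simp_all add: cz.simps[of p m])

lemma zp_hq: assumes "prime p" shows "zp p (hq p m)"
proof (induction m rule: less_induct)
  case (less m)
  have p2: "p \<ge> 2" using assms prime_ge_2_nat by auto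
  show ?case
  proof (cases "m = 0")
    case False
    then have "m div p < m" using p2 by auto
    then have "zp p (hq p (m div p))" using less by simp
    then show ?thesis using p2 zp_Hq[OF assms, of "m mod p"] zp_add hq_rec[OF p2, of m] by simp
  qed simp
qed

lemma cz_hq: assumes "prime p" shows "pc p 2 (of_int (cz p m) - (1 - of_nat p * hq p m))"
proof (induction m rule: less_induct)
  case (less m)
  have p2: "p \<ge> 2" using assms prime_ge_2_nat by auto
  show ?case
  proof (cases "m = 0")
    case False
    define r where "r = m mod p"
    define q where "q = m div p"
    have "q < m" using p2 False unfolding q_def by auto
    then have IH: "pc p 2 (of_int (cz p q) - (1 - of_nat p * hq p q))" using less by auto
    have r: "r \<le> p - 1" using p2 unfolding r_def
      by (simp add: less_Suc_eq_le[symmetric])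
    have A: "pc p 2 (of_int (cc p r) - (1 - of_nat p * Hq r))" using cc_cong[OF assms r] .
    have zr: "zp p (Hq r)" using zp_Hq[OF assms] r p2 by auto
    have zq: "zp p (hq p q)" using zp_hq[OF assms] .
    have e: "of_int (cz p m) - (1 - of_nat p * hq p m) =
      (of_int (cc p r) - (1 - of_nat p * Hq r)) * of_int (cz p q)
      + (1 - of_nat p * Hq r) * (of_int (cz p q) - (1 - of_nat p * hq p q))
      + of_nat p * (of_nat p * (Hq r * hq p q))"
      using cz_rec[OF p2, of m] hq_rec[OF p2, of m] unfolding r_def[symmetric] q_def[symmetric]
      by (simp add: algebra_simps)
    have "pc p 2 ((of_int (cc p r) - (1 - of_nat p * Hq r)) * of_int (cz p q))"
      using A by (intro pc_mult_zp) auto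
    moreover have "pc p 2 ((1 - of_nat p * Hq r) * (of_int (cz p q) - (1 - of_nat p * hq p q)))"
      using IH zr zp_diff[OF zp_1 zp_mult[OF zp_nat zr]] by (intro pc_mult_zp') auto
    moreover have "pc p 2 (of_nat p * (of_nat p * (Hq r * hq p q)))"
      using pc_p_times2[OF pc_p_times[OF zp_mult[OF zr zq]]] by (simp add: numeral_2_eq_2)
    ultimately show ?thesis unfolding e by (metis pc_add)
  qed simp
qed

lemma cz_split: assumes "p \<ge> 2" shows "cz p m = cz p (m mod p ^ L) * cz p (m div p ^ L)"
proof (induction L arbitrary: m)
  case 0
  then show ?case by simp
next
  case (Suc L)
  have a: "m mod p ^ Suc L = p * (m div p mod p ^ L) + m mod p"
    by (simp add: mod_mult2_eq)
  have b: "(m mod p ^ Suc L) mod p = m mod p"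
    by (simp add: mod_mod_cancel)
  have c: "(m mod p ^ Suc L) div p = m div p mod p ^ L"
    using a assms by simp
  have d: "m div p ^ Suc L = m div p div p ^ L"
    by (simp add: div_mult2_eq)
  have "cz p m = cc p (m mod p) * cz p (m div p)" using cz_rec[OF assms] .
  also have "\<dots> = cc p (m mod p) * (cz p (m div p mod p ^ L) * cz p (m div p div p ^ L))"
    using Suc.IH[of "m div p"] by simp
  also have "\<dots> = (cc p ((m mod p ^ Suc L) mod p) * cz p ((m mod p ^ Suc L) div p)) * cz p (m div p ^ Suc L)"
    unfolding b c d by simp
  also have "\<dots> = cz p (m mod p ^ Suc L) * cz p (m div p ^ Suc L)"
    using cz_rec[OF assms, of "m mod p ^ Suc L"] by simp
  finally show ?case .
qed

definition dv :: "int \<Rightarrow> int fps \<Rightarrow> bool" where "dv m f \<longleftrightarrow> (\<forall>i. m dvd f $ i)"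
definition sm :: "int \<Rightarrow> nat \<Rightarrow> int fps \<Rightarrow> bool" where "sm m N f \<longleftrightarrow> (\<forall>i<N. m dvd f $ i)"

lemma dv_sm: "dv m f \<Longrightarrow> sm m N f" unfolding dv_def sm_def by auto
lemma dv_add: "dv m f \<Longrightarrow> dv m g \<Longrightarrow> dv m (f + g)" unfolding dv_def by auto
lemma dv_diff: "dv m f \<Longrightarrow> dv m g \<Longrightarrow> dv m (f - g)" unfolding dv_def by auto
lemma dv_0[simp]: "dv m 0" unfolding dv_def by auto
lemma dv_mult: "dv m f \<Longrightarrow> dv m (g * f)"
  unfolding dv_def fps_mult_nth by (auto intro!: dvd_sum)
lemma dv_mult': "dv m f \<Longrightarrow> dv m (f * g)"
  using dv_mult[of m f g] by (simp add: mult.commute)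
lemma dv_cong_mult: "dv m (f - f') \<Longrightarrow> dv m (g - g') \<Longrightarrow> dv m (f * g - f' * g')"
proof -
  assume a: "dv m (f - f')" "dv m (g - g')"
  have "f * g - f' * g' = (f - f') * g + f' * (g - g')" by (simp add: algebra_simps)
  then show ?thesis using a dv_mult dv_mult' dv_add by metis
qed
lemma dv_cong_power: "dv m (f - g) \<Longrightarrow> dv m (f ^ k - g ^ k)"
  by (induction k) (auto intro: dv_cong_mult)
lemma dv_cong_prod: "(\<And>i. i \<in> S \<Longrightarrow> dv m (f i - g i)) \<Longrightarrow> dv m (prod f S - prod g S)"
  by (induction S rule: infinite_finite_induct) (auto intro: dv_cong_mult)

lemma sm_add: "sm m N f \<Longrightarrow> sm m N g \<Longrightarrow> sm m N (f + g)" unfolding sm_def by auto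
lemma sm_diff: "sm m N f \<Longrightarrow> sm m N g \<Longrightarrow> sm m N (f - g)" unfolding sm_def by auto
lemma sm_uminus: "sm m N f \<Longrightarrow> sm m N (- f)" unfolding sm_def by auto
lemma sm_0[simp]: "sm m N 0" unfolding sm_def by auto
lemma sm_mult: "sm m N f \<Longrightarrow> sm m N (g * f)"
  unfolding sm_def fps_mult_nth by (auto intro!: dvd_sum)
lemma sm_mult': "sm m N f \<Longrightarrow> sm m N (f * g)"
  using sm_mult[of m N f g] by (simp add: mult.commute)
lemma sm_mult2: "sm a N f \<Longrightarrow> sm b N g \<Longrightarrow> sm (a * b) N (f * g)"
  unfolding sm_def fps_mult_nth by (auto intro!: dvd_sum mult_dvd_mono)
lemma sm_Xpow: "sm m N (fps_X ^ N * g)"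
  unfolding sm_def by (auto simp: fps_X_power_mult_nth)
lemma sm_const: "m dvd c \<Longrightarrow> sm m N (fps_const c * f)"
  unfolding sm_def by auto
lemma sm_dvd: "sm m N f \<Longrightarrow> m' dvd m \<Longrightarrow> sm m' N f"
  unfolding sm_def using dvd_trans by blast

lemma coeff_binom:
  assumes "a \<ge> 1"
  shows "((1 - fps_X ^ a :: int fps) ^ r) $ k =
    (if a dvd k \<and> k div a \<le> r then (-1) ^ (k div a) * int (r choose (k div a)) else 0)"
proof -
  have e: "(1 - fps_X ^ a :: int fps) ^ r = (\<Sum>d\<le>r. fps_const ((-1) ^ d * int (r choose d)) * fps_X ^ (a * d))"
  proof -
    have "(1 - fps_X ^ a :: int fps) ^ r = (- (fps_X ^ a) + 1) ^ r" by simp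
    also have "\<dots> = (\<Sum>d\<le>r. of_nat (r choose d) * (- (fps_X ^ a)) ^ d * 1 ^ (r - d))"
      by (rule binomial_ring)
    also have "\<dots> = (\<Sum>d\<le>r. fps_const ((-1) ^ d * int (r choose d)) * fps_X ^ (a * d))"
    proof (rule sum.cong[OF refl])
      fix d
      have m1: "(-1 :: int fps) ^ d = fps_const ((-1) ^ d)"
        by (metis fps_const_1_eq_1 fps_const_neg fps_const_power)
      have "(- (fps_X ^ a) :: int fps) ^ d = fps_const ((-1) ^ d) * fps_X ^ (a * d)"
        by (subst power_minus) (simp only: m1 power_mult)
      moreover have "(of_nat (r choose d) :: int fps) = fps_const (int (r choose d))"
        by (metis fps_of_nat)
      ultimately show "of_nat (r choose d) * (- (fps_X ^ a)) ^ d * 1 ^ (r - d) =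
                 fps_const ((-1) ^ d * int (r choose d)) * (fps_X ^ (a * d) :: int fps)"
        by (simp add: mult.assoc mult.left_commute)
    qed
    finally show ?thesis .
  qed
  have "((1 - fps_X ^ a :: int fps) ^ r) $ k = (\<Sum>d\<le>r. (if k = a * d then (-1) ^ d * int (r choose d) else 0))"
    unfolding e fps_sum_nth by (auto simp: fps_X_power_mult_nth intro!: sum.cong)
  also have "\<dots> = (if a dvd k \<and> k div a \<le> r then (-1) ^ (k div a) * int (r choose (k div a)) else 0)"
  proof (cases "a dvd k \<and> k div a \<le> r")
    case True
    then have "(\<Sum>d\<le>r. (if k = a * d then (-1) ^ d * int (r choose d) else 0)) =
               (\<Sum>d\<in>{k div a}. (if k = a * d then (-1) ^ d * int (r choose d) else 0))"
      using assms by (intro sum.mono_neutral_right) auto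
    then show ?thesis using True by auto
  next
    case False
    then have "\<forall>d\<le>r. k \<noteq> a * d" using assms by auto
    then show ?thesis using False by simp
  qed
  finally show ?thesis .
qed

lemma frob:
  assumes "prime p" "odd p" "a \<ge> 1"
  shows "dv (int p) ((1 - fps_X ^ a :: int fps) ^ p - (1 - fps_X ^ (a * p)))"
  unfolding dv_def
proof
  fix k
  have one: "(1 - fps_X ^ (a * p) :: int fps) = (1 - fps_X ^ (a * p)) ^ 1" by simp
  have ap: "a * p \<ge> 1" using assms prime_gt_0_nat by (simp add: Suc_le_eq)
  have c2: "(1 - fps_X ^ (a * p) :: int fps) $ k = (if a * p dvd k \<and> k div (a * p) \<le> 1 then (-1) ^ (k div (a * p)) * int (1 choose (k div (a * p))) else 0)"
    by (subst one, rule coeff_binom[OF ap])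
  show "int p dvd ((1 - fps_X ^ a) ^ p - (1 - fps_X ^ (a * p))) $ k"
  proof (cases "a dvd k \<and> k div a \<le> p")
    case True
    define d where "d = k div a"
    have k: "k = a * d" using True d_def by auto
    have dp: "d \<le> p" using True d_def by auto
    have "a * p dvd k \<longleftrightarrow> p dvd d" using k assms by auto
    moreover have "k div (a * p) = d div p" using k assms by (simp add: div_mult2_eq)
    ultimately have c2'': "(1 - fps_X ^ (a * p) :: int fps) $ k = (if p dvd d \<and> d div p \<le> 1 then (-1) ^ (d div p) * int (1 choose (d div p)) else 0)"
      using c2 by simp
    have p0: "p > 0" using prime_gt_0_nat[OF assms(1)] .
    have c2': "(1 - fps_X ^ (a * p) :: int fps) $ k = (if d = 0 then 1 else if d = p then -1 else 0)"
    proof (cases "p dvd d")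
      case True
      then obtain e where e: "d = p * e" by auto
      then have "e \<le> 1" using dp p0 by (metis mult_le_cancel1 nat_mult_1_right)
      then have "e = 0 \<or> e = 1" by auto
      then show ?thesis using c2'' e p0 by auto
    next
      case False
      then have "d \<noteq> 0" "d \<noteq> p" by (metis dvd_0_right, metis dvd_refl)
      then show ?thesis using c2'' False by simp
    qed
    have c1: "((1 - fps_X ^ a :: int fps) ^ p) $ k = (-1) ^ d * int (p choose d)"
      using coeff_binom[OF assms(3), of p k] True d_def by simp
    show ?thesis
    proof (cases "d = 0 \<or> d = p")
      case True
      then show ?thesis using c1 c2' assms(2) prime_gt_0_nat[OF assms(1)] by auto
    next
      case False
      then have "p dvd (p choose d)" using dp assms by (intro dvd_choose_prime) auto
      then have "int p dvd (-1) ^ d * int (p choose d)" by (simp add: int_dvd_int_iff)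
      then show ?thesis using c1 c2' False by simp
    qed
  next
    case False
    then have c1: "((1 - fps_X ^ a :: int fps) ^ p) $ k = 0" using coeff_binom[OF assms(3), of p k] by simp
    have ncond: "\<not> (a * p dvd k \<and> k div (a * p) \<le> 1)"
    proof
      assume h: "a * p dvd k \<and> k div (a * p) \<le> 1"
      then obtain e where e: "k = a * p * e" by auto
      then have "a dvd k" by auto
      moreover have "k div a = p * e" using e assms by auto
      moreover have "e \<le> 1" using h e assms prime_gt_0_nat[OF assms(1)] by auto
      ultimately show False using False by auto
    qed
    have c2z: "(1 - fps_X ^ (a * p) :: int fps) $ k = 0" by (simp only: c2 ncond if_False)
    have "((1 - fps_X ^ a :: int fps) ^ p - (1 - fps_X ^ (a * p))) $ k = ((1 - fps_X ^ a :: int fps) ^ p) $ k - (1 - fps_X ^ (a * p) :: int fps) $ k"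
      by (rule fps_sub_nth)
    then show ?thesis by (simp only: c1 c2z) simp
  qed
qed

lemma cz_digit: "p \<ge> 2 \<Longrightarrow> d < p \<Longrightarrow> cz p d = cc p d"
  using cz_rec[of p d] by simp

lemma coeff_Pprod:
  assumes "p \<ge> 2"
  shows "(\<Prod>i<L. (1 - fps_X ^ (p ^ i) :: int fps) ^ (p - 1)) $ m = (if m < p ^ L then cz p m else 0)"
proof (induction L arbitrary: m)
  case 0
  then show ?case by (simp add: fps_one_nth)
next
  case (Suc L)
  define F where "F = (\<Prod>i<L. (1 - fps_X ^ (p ^ i) :: int fps) ^ (p - 1))"
  define Q where "Q = (1 - fps_X ^ (p ^ L) :: int fps) ^ (p - 1)"
  define b where "b = p ^ L"
  have b0: "b > 0" using assms unfolding b_def by simp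
  have Qc: "Q $ t = (if b dvd t \<and> t div b \<le> p - 1 then cc p (t div b) else 0)" for t
    unfolding Q_def b_def using coeff_binom[of "p ^ L" "p - 1" t] assms by (simp add: cc_def)
  have pe: "(\<Prod>i<Suc L. (1 - fps_X ^ (p ^ i) :: int fps) ^ (p - 1)) = F * Q"
    unfolding F_def Q_def by (rule prod.lessThan_Suc)
  have e3: "F $ j = (if j < b then cz p j else 0)" for j
    unfolding F_def b_def by (rule Suc.IH)
  have e: "(\<Prod>i<Suc L. (1 - fps_X ^ (p ^ i) :: int fps) ^ (p - 1)) $ m =
      (\<Sum>j=0..m. (if j < b then cz p j else 0) * Q $ (m - j))"
    unfolding pe fps_mult_nth e3 by (rule refl)
  have key: "j = m mod b \<and> (m - j) div b = m div b" if jj: "j \<le> m" "j < b" "b dvd (m - j)" for j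
  proof -
    obtain t where t: "m - j = b * t" using jj by (auto elim: dvdE)
    then have m: "m = j + b * t" using jj by simp
    then show ?thesis using jj b0 t by simp
  qed
  have pb: "p ^ Suc L = b * p" unfolding b_def by simp
  show ?case
  proof (cases "m < p ^ Suc L")
    case True
    define j0 where "j0 = m mod b"
    have j0: "j0 \<le> m" "j0 < b" unfolding j0_def using b0 by auto
    have mj0: "m - j0 = b * (m div b)" unfolding j0_def by (simp add: minus_mod_eq_mult_div)
    have "m < b * p" using True unfolding b_def by (simp add: mult.commute)
    then have mdb: "m div b < p" using b0 by (simp add: div_less_iff_less_mult mult.commute)
    have "(\<Sum>j=0..m. (if j < b then cz p j else 0) * Q $ (m - j)) =
          (\<Sum>j\<in>{j0}. (if j < b then cz p j else 0) * Q $ (m - j))"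
    proof (rule sum.mono_neutral_right)
      show "\<forall>j\<in>{0..m} - {j0}. (if j < b then cz p j else 0) * Q $ (m - j) = 0"
      proof
        fix j assume j: "j \<in> {0..m} - {j0}"
        show "(if j < b then cz p j else 0) * Q $ (m - j) = 0"
        proof (cases "j < b \<and> b dvd (m - j)")
          case True
          then have "j = j0" using key[of j] j unfolding j0_def by auto
          then show ?thesis using j by auto
        next
          case False
          then show ?thesis using Qc[of "m - j"] by auto
        qed
      qed
    qed (use j0 in auto)
    also have "\<dots> = cz p j0 * cc p (m div b)"
      using j0 mj0 Qc[of "m - j0"] mdb b0 by simp
    also have "\<dots> = cz p m"
      using cz_split[OF assms, of m L] cz_digit[OF assms mdb] unfolding j0_def b_def by simp
    finally show ?thesis using e True by simp
  next
    case False
    have "(\<Sum>j=0..m. (if j < b then cz p j else 0) * Q $ (m - j)) = 0"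
    proof (rule sum.neutral, rule ballI)
      fix j assume j: "j \<in> {0..m}"
      show "(if j < b then cz p j else 0) * Q $ (m - j) = 0"
      proof (cases "j < b \<and> b dvd (m - j)")
        case True
        then have "(m - j) div b = m div b" using key[of j] j by auto
        moreover have "\<not> m < b * p" using False unfolding b_def by (simp add: mult.commute)
        then have "m div b \<ge> p" using b0
          by (metis div_less_iff_less_mult mult.commute not_le)
        ultimately show ?thesis using Qc[of "m - j"] assms by auto
      next
        case False
        then show ?thesis using Qc[of "m - j"] by auto
      qed
    qed
    then show ?thesis using e False by simp
  qed
qed

lemma sm_sum: "(\<And>i. i \<in> S \<Longrightarrow> sm m N (f i)) \<Longrightarrow> sm m N (\<Sum>i\<in>S. f i)"
  by (induction S rule: infinite_finite_induct) (auto intro: sm_add)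

lemma binom_sm:
  assumes "sm m N Z" "m dvd int w"
  shows "sm (m * m) N ((Y + Z) ^ w - Y ^ w)"
proof -
  have "(Z + Y) ^ w = (\<Sum>j\<le>w. of_nat (w choose j) * Z ^ j * Y ^ (w - j))"
    by (rule binomial_ring)
  also have "\<dots> = Y ^ w + (\<Sum>j\<in>{..w} - {0}. of_nat (w choose j) * Z ^ j * Y ^ (w - j))"
    by (subst sum.remove[of _ 0]) auto
  finally have e: "(Y + Z) ^ w - Y ^ w = (\<Sum>j\<in>{..w} - {0}. of_nat (w choose j) * Z ^ j * Y ^ (w - j))"
    by (simp add: add.commute)
  have "sm (m * m) N (of_nat (w choose j) * Z ^ j * Y ^ (w - j))" if j: "j \<in> {..w} - {0}" for j
  proof (cases "j = 1")
    case True
    have c: "(of_nat (w choose j) :: int fps) = fps_const (int w) * 1" using True by (simp add: fps_of_nat[symmetric])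
    have "sm m N (fps_const (int w) * 1)" using assms(2) by (rule sm_const)
    then have "sm (m * m) N ((fps_const (int w) * 1) * Z)" using assms(1) by (rule sm_mult2)
    then show ?thesis unfolding c using True by (simp add: sm_mult')
  next
    case False
    then have "j \<ge> 2" using j by auto
    then have zj: "Z ^ j = (Z * Z) * Z ^ (j - 2)"
      by (metis (no_types, lifting) le_add_diff_inverse power2_eq_square power_add)
    have "sm (m * m) N (Z * Z)" using assms(1) assms(1) by (rule sm_mult2)
    then have "sm (m * m) N ((Z * Z) * Z ^ (j - 2))" by (rule sm_mult')
    then have "sm (m * m) N (of_nat (w choose j) * Z ^ j)" unfolding zj by (rule sm_mult)
    then show ?thesis by (rule sm_mult')
  qed
  then show ?thesis unfolding e by (intro sm_sum) auto
qed

lemma n_lt_pow: "(p::nat) \<ge> 2 \<Longrightarrow> n < p ^ Suc n"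
proof -
  assume "p \<ge> 2"
  then have "n < 2 ^ n" "2 ^ n \<le> p ^ n" by (auto intro: power_mono)
  moreover have "p ^ n \<le> p ^ Suc n" using \<open>p \<ge> 2\<close> by simp
  ultimately show ?thesis by linarith
qed

lemma main_cong:
  assumes p: "prime p" "odd p" and w: "w \<ge> 1" "int p dvd int w"
  shows "int p * int p dvd A p ((p - 1) * (w - 1)) n - ((1 - fps_X) ^ w * (\<Prod>i\<le>n. (1 - fps_X ^ (p ^ i) :: int fps)) ^ (p - 1)) $ n"
proof -
  have p2: "p \<ge> 2" using p prime_ge_2_nat by auto
  define Gm where "Gm = (\<Prod>i\<le>n. geom (p ^ i))"
  define P where "P = (\<Prod>i\<le>n. (1 - fps_X ^ (p ^ i) :: int fps))"
  define N where "N = p ^ Suc n"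
  define k where "k = (p - 1) * (w - 1)"
  have GP: "Gm * P = 1"
  proof -
    have "Gm * P = (\<Prod>i\<le>n. geom (p ^ i) * (1 - fps_X ^ (p ^ i)))"
      unfolding Gm_def P_def by (rule prod.distrib[symmetric])
    also have "\<dots> = (\<Prod>i\<le>n. 1)"
      using p2 by (intro prod.cong refl geom_inverse) simp
    finally show ?thesis by simp
  qed
  have Pp: "dv (int p) (P ^ p - (\<Prod>i\<le>n. (1 - fps_X ^ (p ^ Suc i) :: int fps)))"
    unfolding P_def prod_power_distrib
  proof (rule dv_cong_prod)
    fix i
    have "dv (int p) ((1 - fps_X ^ (p ^ i) :: int fps) ^ p - (1 - fps_X ^ (p ^ i * p)))"
      using p p2 by (intro frob) auto
    then show "dv (int p) ((1 - fps_X ^ (p ^ i) :: int fps) ^ p - (1 - fps_X ^ (p ^ Suc i)))"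
      by (simp add: mult.commute)
  qed
  have shift: "(\<Prod>i\<le>n. (1 - fps_X ^ (p ^ Suc i) :: int fps)) * (1 - fps_X) = P * (1 - fps_X ^ N)"
  proof -
    have "(\<Prod>i\<le>Suc n. (1 - fps_X ^ (p ^ i) :: int fps)) = (1 - fps_X ^ (p ^ 0)) * (\<Prod>i\<le>n. (1 - fps_X ^ (p ^ Suc i)))"
      by (rule prod.atMost_Suc_shift)
    moreover have "(\<Prod>i\<le>Suc n. (1 - fps_X ^ (p ^ i) :: int fps)) = P * (1 - fps_X ^ N)"
      unfolding P_def N_def by (rule prod.atMost_Suc)
    ultimately show ?thesis by (simp add: mult.commute)
  qed
  define Z0 where "Z0 = P ^ p * (1 - fps_X) - P * (1 - fps_X ^ N)"
  have dZ0: "dv (int p) Z0"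
  proof -
    have "Z0 = (P ^ p - (\<Prod>i\<le>n. (1 - fps_X ^ (p ^ Suc i) :: int fps))) * (1 - fps_X)"
      unfolding Z0_def using shift by (simp add: algebra_simps)
    then show ?thesis using Pp dv_mult' by simp
  qed
  have Gp: "Gm ^ p = Gm ^ (p - 1) * Gm" using p2
    by (metis Suc_diff_1 less_le_trans pos2 power_Suc2)
  have GPp: "Gm ^ p * P ^ p = 1" using GP by (metis power_mult_distrib power_one)
  have GPp1: "Gm ^ (p - 1) * P ^ (p - 1) = 1" using GP by (metis power_mult_distrib power_one)
  have GPq: "Gm ^ p * P = Gm ^ (p - 1)" using GP Gp by (metis mult.assoc mult.right_neutral)
  have "Gm ^ p * Z0 = (Gm ^ p * P ^ p) * (1 - fps_X) - (Gm ^ p * P) * (1 - fps_X ^ N)"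
    unfolding Z0_def by (simp add: algebra_simps)
  also have "\<dots> = (1 - fps_X) - Gm ^ (p - 1) * (1 - fps_X ^ N)"
    unfolding GPp GPq by simp
  finally have "Gm ^ (p - 1) - (1 - fps_X) = fps_X ^ N * Gm ^ (p - 1) - Gm ^ p * Z0"
    by (simp add: algebra_simps)
  moreover have "sm (int p) N (fps_X ^ N * Gm ^ (p - 1))" by (rule sm_Xpow)
  moreover have "sm (int p) N (Gm ^ p * Z0)" using dZ0 by (intro dv_sm dv_mult)
  ultimately have Zsm: "sm (int p) N (Gm ^ (p - 1) - (1 - fps_X))" by (simp add: sm_diff)
  have B: "sm (int p * int p) N (((1 - fps_X) + (Gm ^ (p - 1) - (1 - fps_X))) ^ w - (1 - fps_X) ^ w)"
    using Zsm w(2) by (rule binom_sm)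
  have kw: "(p - 1) * w = k + (p - 1)"
  proof -
    obtain w' where "w = Suc w'" using w(1) by (cases w) auto
    then show ?thesis unfolding k_def by simp
  qed
  have Gk: "Gm ^ k = (Gm ^ (p - 1)) ^ w * P ^ (p - 1)"
  proof -
    have "(Gm ^ (p - 1)) ^ w = Gm ^ k * Gm ^ (p - 1)"
      by (simp only: power_mult[symmetric] kw power_add)
    then have "(Gm ^ (p - 1)) ^ w * P ^ (p - 1) = Gm ^ k * (Gm ^ (p - 1) * P ^ (p - 1))"
      by (simp only: mult.assoc)
    then show ?thesis using GPp1 by (simp only: mult.right_neutral)
  qed
  have "Gm ^ k - (1 - fps_X) ^ w * P ^ (p - 1) = ((Gm ^ (p - 1)) ^ w - (1 - fps_X) ^ w) * P ^ (p - 1)"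
    unfolding Gk by (simp add: algebra_simps)
  moreover have "sm (int p * int p) N (((Gm ^ (p - 1)) ^ w - (1 - fps_X) ^ w) * P ^ (p - 1))"
    using B by (intro sm_mult') simp
  ultimately have S: "sm (int p * int p) N (Gm ^ k - (1 - fps_X) ^ w * P ^ (p - 1))" by simp
  have nN: "n < N" unfolding N_def using n_lt_pow[OF p2] .
  have "A p k n = (Gm ^ k) $ n"
    unfolding A_def Gm_def prod_power_distrib by simp
  then show ?thesis using S nN unfolding sm_def k_def[symmetric] P_def[symmetric] by auto
qed

lemma frob_pow:
  assumes "prime p" "odd p"
  shows "dv (int p) ((1 - fps_X :: int fps) ^ (p ^ s) - (1 - fps_X ^ (p ^ s)))"
proof (induction s)
  case 0
  then show ?case by simp
next
  case (Suc s)
  have a: "dv (int p) (((1 - fps_X :: int fps) ^ (p ^ s)) ^ p - (1 - fps_X ^ (p ^ s)) ^ p)"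
    using Suc by (rule dv_cong_power)
  have b: "dv (int p) ((1 - fps_X ^ (p ^ s) :: int fps) ^ p - (1 - fps_X ^ (p ^ s * p)))"
    using assms by (intro frob) (auto simp: prime_gt_0_nat Suc_le_eq)
  have "(1 - fps_X :: int fps) ^ (p ^ Suc s) - (1 - fps_X ^ (p ^ Suc s)) =
        (((1 - fps_X :: int fps) ^ (p ^ s)) ^ p - (1 - fps_X ^ (p ^ s)) ^ p) +
        ((1 - fps_X ^ (p ^ s) :: int fps) ^ p - (1 - fps_X ^ (p ^ s * p)))"
    by (simp add: power_mult[symmetric] mult.commute)
  then show ?case using a b dv_add by metis
qed

lemma Y_cong:
  assumes p: "prime p" "odd p" and u: "u \<ge> 1" and s: "s \<ge> 1" and w: "w = u * p ^ s" and n: "n \<ge> w"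
  shows "pc p 2 (of_int (((1 - fps_X) ^ w * (\<Prod>i\<le>n. (1 - fps_X ^ (p ^ i) :: int fps)) ^ (p - 1)) $ n)
                 + of_nat p * (\<Sum>j\<le>u. (-1) ^ j * of_nat (u choose j) * hq p (n - p ^ s * j)))"
proof -
  have p2: "p \<ge> 2" using p prime_ge_2_nat by auto
  define b where "b i = ((1 - fps_X :: int fps) ^ w) $ i" for i
  define b' where "b' i = ((1 - fps_X ^ (p ^ s) :: int fps) ^ u) $ i" for i
  define h where "h i = hq p (n - i)" for i
  define c where "c i = cz p (n - i)" for i
  have bform: "b i = (if i \<le> w then (-1) ^ i * int (w choose i) else 0)" for i
    unfolding b_def using coeff_binom[of 1 w i] by simp
  have b'form: "b' i = (if p ^ s dvd i \<and> i div p ^ s \<le> u then (-1) ^ (i div p ^ s) * int (u choose (i div p ^ s)) else 0)" for i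
    unfolding b'_def using coeff_binom[of "p ^ s" u i] p2 by simp
  have Pc: "((\<Prod>i\<le>n. (1 - fps_X ^ (p ^ i) :: int fps)) ^ (p - 1)) $ m = cz p m" if "m \<le> n" for m
  proof -
    have "((\<Prod>i\<le>n. (1 - fps_X ^ (p ^ i) :: int fps)) ^ (p - 1)) = (\<Prod>i<Suc n. (1 - fps_X ^ (p ^ i) :: int fps) ^ (p - 1))"
      by (simp add: prod_power_distrib lessThan_Suc_atMost)
    moreover have "m < p ^ Suc n" using n_lt_pow[OF p2, of n] that by simp
    ultimately show ?thesis using coeff_Pprod[OF p2, of "Suc n" m] by simp
  qed
  have Y: "((1 - fps_X) ^ w * (\<Prod>i\<le>n. (1 - fps_X ^ (p ^ i) :: int fps)) ^ (p - 1)) $ n = (\<Sum>i=0..n. b i * c i)"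
    unfolding fps_mult_nth b_def c_def using Pc by (intro sum.cong) auto
  have R1: "(\<Sum>i=0..n. (of_int (b i) :: rat)) = 0"
  proof -
    have "(\<Sum>i=0..n. (of_int (b i) :: rat)) = (\<Sum>i\<le>w. (of_int (b i) :: rat))"
      using n by (intro sum.mono_neutral_right) (auto simp: bform)
    also have "\<dots> = (\<Sum>i\<le>w. (-1) ^ i * of_nat (w choose i))"
      by (intro sum.cong) (auto simp: bform)
    also have "\<dots> = 0"
      using u s p2 w by (intro choose_alternating_sum) auto
    finally show ?thesis .
  qed
  have dvb: "dv (int p) ((1 - fps_X :: int fps) ^ w - (1 - fps_X ^ (p ^ s)) ^ u)"
  proof -
    have eq: "(1 - fps_X :: int fps) ^ w = ((1 - fps_X) ^ (p ^ s)) ^ u"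
      unfolding w by (metis power_mult mult.commute)
    show ?thesis unfolding eq by (rule dv_cong_power[OF frob_pow[OF p]])
  qed
  have R3: "pc p 1 (of_int (b i - b' i))" for i
    using dvb unfolding dv_def b_def b'_def by (intro pc_of_int) simp
  have R2: "(\<Sum>i=0..n. of_int (b' i) * h i) = (\<Sum>j\<le>u. (-1) ^ j * of_nat (u choose j) * hq p (n - p ^ s * j))"
  proof -
    have ps: "p ^ s > 0" using p2 by simp
    have "(\<Sum>i=0..n. of_int (b' i) * h i) = (\<Sum>i\<in>(\<lambda>j. p ^ s * j) ` {..u}. of_int (b' i) * h i)"
    proof (rule sum.mono_neutral_right)
      show "(\<lambda>j. p ^ s * j) ` {..u} \<subseteq> {0..n}"
        using n w by (auto simp: mult.commute intro: le_trans[OF mult_le_mono1])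
      show "\<forall>i\<in>{0..n} - (\<lambda>j. p ^ s * j) ` {..u}. of_int (b' i) * h i = 0"
      proof
        fix i assume i: "i \<in> {0..n} - (\<lambda>j. p ^ s * j) ` {..u}"
        have "\<not> (p ^ s dvd i \<and> i div p ^ s \<le> u)"
        proof
          assume "p ^ s dvd i \<and> i div p ^ s \<le> u"
          then have "i = p ^ s * (i div p ^ s)" "i div p ^ s \<in> {..u}" by auto
          then show False using i by blast
        qed
        then have "b' i = 0" unfolding b'form by (simp only: if_False)
        then show "of_int (b' i) * h i = 0" by simp
      qed
    qed simp
    also have "\<dots> = (\<Sum>j\<le>u. of_int (b' (p ^ s * j)) * h (p ^ s * j))"
      using ps by (subst sum.reindex) (auto simp: inj_on_def)
    also have "\<dots> = (\<Sum>j\<le>u. (-1) ^ j * of_nat (u choose j) * hq p (n - p ^ s * j))"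
      using ps by (intro sum.cong) (auto simp: b'form h_def)
    finally show ?thesis .
  qed
  have main: "(\<Sum>i=0..n. of_int (b i) * of_int (c i) :: rat) =
     (\<Sum>i=0..n. of_int (b i) * (of_int (c i) - (1 - of_nat p * h i))) + (\<Sum>i=0..n. (of_int (b i) :: rat))
     - of_nat p * (\<Sum>i=0..n. of_int (b i - b' i) * h i) - of_nat p * (\<Sum>i=0..n. of_int (b' i) * h i)"
    by (simp add: sum_distrib_left sum.distrib[symmetric] sum_subtractf[symmetric] algebra_simps)
  have P1: "pc p 2 (\<Sum>i=0..n. of_int (b i) * (of_int (c i) - (1 - of_nat p * h i)))"
    unfolding c_def h_def using cz_hq[OF p(1)] by (intro pc_sum pc_mult_zp') auto
  have P2: "pc p 2 (of_nat p * (\<Sum>i=0..n. of_int (b i - b' i) * h i))"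
  proof -
    have "pc p 1 (\<Sum>i=0..n. of_int (b i - b' i) * h i)"
      unfolding h_def using R3 zp_hq[OF p(1)] by (intro pc_sum pc_mult_zp) auto
    then show ?thesis using pc_p_times2 by (simp add: numeral_2_eq_2)
  qed
  have "of_int (((1 - fps_X) ^ w * (\<Prod>i\<le>n. (1 - fps_X ^ (p ^ i) :: int fps)) ^ (p - 1)) $ n)
                 + of_nat p * (\<Sum>j\<le>u. (-1) ^ j * of_nat (u choose j) * hq p (n - p ^ s * j)) =
        (\<Sum>i=0..n. of_int (b i) * (of_int (c i) - (1 - of_nat p * h i))) - of_nat p * (\<Sum>i=0..n. of_int (b i - b' i) * h i)"
    unfolding Y of_int_sum of_int_mult main R1 R2 by simp
  then show ?thesis using P1 P2 pc_diff by metis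
qed

lemma hq_mult_p: "p \<ge> 2 \<Longrightarrow> hq p (p * m) = hq p m"
  using hq_rec[of p "p * m"] by simp

lemma hq_pow: "p \<ge> 2 \<Longrightarrow> hq p (p ^ s * m) = hq p m"
  by (induction s) (simp_all add: mult.assoc hq_mult_p)

lemma hq_one: "p \<ge> 2 \<Longrightarrow> hq p 1 = 1"
  using hq_rec[of p 1] by (simp add: Hq_def)

lemma Hq_one: "Hq 1 = 1" by (simp add: Hq_def)

lemma hq_three:
  assumes "p \<ge> 2" "AA \<ge> 2" "b < p" "e < p"
  shows "hq p (p ^ AA + p * b + e) = 1 + Hq b + Hq e"
proof -
  obtain c where c: "AA = c + 2" using assms(2) by (metis add.commute le_Suc_ex)
  have pA: "p ^ AA = p * (p * p ^ c)" using c by (simp add: power_add mult.commute)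
  have m0: "p ^ AA + p * b + e = e + p * (p * p ^ c + b)" unfolding pA by (simp add: algebra_simps)
  have m1: "(p ^ AA + p * b + e) mod p = e" "(p ^ AA + p * b + e) div p = p * p ^ c + b"
    unfolding m0 using assms by simp_all
  have m2: "(p * p ^ c + b) mod p = b" "(p * p ^ c + b) div p = p ^ c"
    using assms by simp_all
  have "hq p (p ^ AA + p * b + e) = Hq e + (Hq b + hq p (p ^ c))"
    using hq_rec[OF assms(1), of "p ^ AA + p * b + e"] hq_rec[OF assms(1), of "p * p ^ c + b"] m1 m2 by simp
  also have "hq p (p ^ c) = 1" using hq_pow[OF assms(1), of c 1] hq_one[OF assms(1)] by simp
  finally show ?thesis by simp
qed

lemma zp_alt[intro, simp]: "zp p ((-1) ^ j * of_nat c)"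
proof -
  have "((-1) ^ j * of_nat c :: rat) = of_int ((-1) ^ j * int c)" by simp
  then show ?thesis by (metis zp_int)
qed

lemma Hq_diff: "a0 \<ge> 1 \<Longrightarrow> Hq a0 - Hq (a0 - 1) = 1 / of_nat a0"
  using Hq_Suc[of "a0 - 1"] by simp

lemma alt_corr:
  assumes "u \<ge> 1"
  shows "(\<Sum>j\<le>u. (-1) ^ j * of_nat (u choose j) * (if j = 0 then \<alpha> else if j = 1 then \<beta> else 0)) = \<alpha> - of_nat u * (\<beta> :: rat)"
proof -
  have "(\<Sum>j\<le>u. (-1) ^ j * of_nat (u choose j) * (if j = 0 then \<alpha> else if j = 1 then \<beta> else 0)) =
        (\<Sum>j\<in>{0, 1}. (-1) ^ j * of_nat (u choose j) * (if j = 0 then \<alpha> else if j = 1 then \<beta> else (0::rat)))"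
    using assms by (intro sum.mono_neutral_right) auto
  then show ?thesis by simp
qed

lemma alt_const:
  assumes "u \<ge> 1"
  shows "(\<Sum>j\<le>u. (-1) ^ j * of_nat (u choose j) * (c :: rat)) = 0"
proof -
  have "(\<Sum>j\<le>u. (-1) ^ j * of_nat (u choose j) * c) = (\<Sum>j\<le>u. (-1) ^ j * of_nat (u choose j)) * c"
    by (simp add: sum_distrib_right)
  also have "(\<Sum>j\<le>u. (-1) ^ j * of_nat (u choose j) :: rat) = 0"
    using assms by (intro choose_alternating_sum) auto
  finally show ?thesis by simp
qed

lemma T_t0:
  assumes p: "prime p" "p \<ge> 3" and u: "1 \<le> u" "u \<le> p - 1" and AA: "AA \<ge> 2" and a0: "1 \<le> a0" "a0 \<le> p - 1"
  shows "pc p 1 ((\<Sum>j\<le>u. (-1) ^ j * of_nat (u choose j) * hq p (p ^ AA + p * a0 - j)) - (1 / of_nat a0 + Hq (u - 1)))"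
proof -
  have p2: "p \<ge> 2" using p by auto
  define v where "v j = (1 + Hq (a0 - 1) + Hq (j - 1)) + (if j = 0 then Hq a0 - Hq (a0 - 1) else if j = 1 then 0 else 0)" for j
  have d: "pc p 1 (hq p (p ^ AA + p * a0 - j) - v j)" if j: "j \<le> u" for j
  proof (cases "j = 0")
    case True
    then show ?thesis unfolding v_def using hq_three[OF p2 AA, of a0 0] a0 p2 by simp
  next
    case False
    have pa: "p * a0 = p * (a0 - 1) + p" using a0 by (cases a0) auto
    have "j \<le> p" using j u by auto
    then have e: "p ^ AA + p * a0 - j = p ^ AA + p * (a0 - 1) + (p - j)"
      using pa by linarith
    have "hq p (p ^ AA + p * a0 - j) = 1 + Hq (a0 - 1) + Hq (p - j)"
      unfolding e using hq_three[OF p2 AA, of "a0 - 1" "p - j"] a0 False p2 by simp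
    then have "hq p (p ^ AA + p * a0 - j) - v j = Hq (p - j) - Hq (j - 1)" unfolding v_def using False by simp
    then show ?thesis using Hq_refl[OF p, of j] False j u by simp
  qed
  have sv: "(\<Sum>j\<le>u. (-1) ^ j * of_nat (u choose j) * v j) = 1 / of_nat a0 + Hq (u - 1)"
  proof -
    have "(\<Sum>j\<le>u. (-1) ^ j * of_nat (u choose j) * v j) =
          (\<Sum>j\<le>u. (-1) ^ j * of_nat (u choose j) * (1 + Hq (a0 - 1))) + (\<Sum>j\<le>u. (-1) ^ j * of_nat (u choose j) * Hq (j - 1))
          + (\<Sum>j\<le>u. (-1) ^ j * of_nat (u choose j) * (if j = 0 then Hq a0 - Hq (a0 - 1) else if j = 1 then 0 else 0))"
      unfolding v_def by (simp add: sum.distrib[symmetric] algebra_simps)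
    also have "\<dots> = 1 / of_nat a0 + Hq (u - 1)"
      unfolding alt_const[OF u(1)] alt_S0[OF u(1)] alt_corr[OF u(1)] Hq_diff[OF a0(1)] by simp
    finally show ?thesis .
  qed
  have "(\<Sum>j\<le>u. (-1) ^ j * of_nat (u choose j) * hq p (p ^ AA + p * a0 - j)) - (1 / of_nat a0 + Hq (u - 1)) =
        (\<Sum>j\<le>u. (-1) ^ j * of_nat (u choose j) * (hq p (p ^ AA + p * a0 - j) - v j))"
    unfolding sv[symmetric] by (simp add: sum_subtractf[symmetric] algebra_simps)
  moreover have "pc p 1 (\<Sum>j\<le>u. (-1) ^ j * of_nat (u choose j) * (hq p (p ^ AA + p * a0 - j) - v j))"
    using d by (intro pc_sum pc_mult_zp') auto
  ultimately show ?thesis by simp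
qed

lemma T_t1:
  assumes p: "prime p" "p \<ge> 3" and u: "1 \<le> u" "u \<le> p - 1" and AA: "AA \<ge> 2" and a0: "1 \<le> a0" "a0 \<le> p - 1"
  shows "pc p 1 ((\<Sum>j\<le>u. (-1) ^ j * of_nat (u choose j) * hq p (p ^ AA + p * a0 + 1 - j))
           - (of_nat u - of_nat (u - 1) * Hq (u - 1) + (1 - of_nat u) / of_nat a0))"
proof -
  have p2: "p \<ge> 2" using p by auto
  define D where "D = Hq a0 - Hq (a0 - 1)"
  define v where "v j = (1 + Hq (a0 - 1) + Hq (j - 2)) + (if j = 0 then 1 + D else if j = 1 then D else 0)" for j
  have d: "pc p 1 (hq p (p ^ AA + p * a0 + 1 - j) - v j)" if j: "j \<le> u" for j
  proof (cases "j \<le> 1")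
    case True
    then have "j = 0 \<or> j = 1" by auto
    then show ?thesis
    proof
      assume j0: "j = 0"
      then show ?thesis unfolding v_def D_def using hq_three[OF p2 AA, of a0 1] a0 p2 Hq_one by simp
    next
      assume j1: "j = 1"
      then show ?thesis unfolding v_def D_def using hq_three[OF p2 AA, of a0 0] a0 p2 by simp
    qed
  next
    case False
    have pa: "p * a0 = p * (a0 - 1) + p" using a0 by (cases a0) auto
    have "j \<le> p" "j \<ge> 2" using j u False by auto
    then have e: "p ^ AA + p * a0 + 1 - j = p ^ AA + p * (a0 - 1) + (p - (j - 1))"
      using pa by linarith
    have "hq p (p ^ AA + p * a0 + 1 - j) = 1 + Hq (a0 - 1) + Hq (p - (j - 1))"
      unfolding e using hq_three[OF p2 AA, of "a0 - 1" "p - (j - 1)"] a0 False p2 by simp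
    then have "hq p (p ^ AA + p * a0 + 1 - j) - v j = Hq (p - (j - 1)) - Hq ((j - 1) - 1)" unfolding v_def using False
      by (simp add: numeral_2_eq_2 diff_diff_left)
    then show ?thesis using Hq_refl[OF p, of "j - 1"] False j u by simp
  qed
  have sv: "(\<Sum>j\<le>u. (-1) ^ j * of_nat (u choose j) * v j) = of_nat u - of_nat (u - 1) * Hq (u - 1) + (1 - of_nat u) / of_nat a0"
  proof -
    have "(\<Sum>j\<le>u. (-1) ^ j * of_nat (u choose j) * v j) =
          (\<Sum>j\<le>u. (-1) ^ j * of_nat (u choose j) * (1 + Hq (a0 - 1))) + (\<Sum>j\<le>u. (-1) ^ j * of_nat (u choose j) * Hq (j - 2))
          + (\<Sum>j\<le>u. (-1) ^ j * of_nat (u choose j) * (if j = 0 then 1 + D else if j = 1 then D else 0))"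
      unfolding v_def by (simp add: sum.distrib[symmetric] algebra_simps)
    also have "\<dots> = of_nat (u - 1) - of_nat (u - 1) * Hq (u - 1) + (1 + D - of_nat u * D)"
      unfolding alt_const[OF u(1)] alt_S1[OF u(1)] alt_corr[OF u(1)] by simp
    also have "\<dots> = of_nat u - of_nat (u - 1) * Hq (u - 1) + (1 - of_nat u) / of_nat a0"
    proof -
      have "of_nat (u - 1) = (of_nat u - 1 :: rat)" using u(1) by (simp add: of_nat_diff)
      moreover have "(of_nat a0 :: rat) \<noteq> 0" using a0 by simp
      ultimately show ?thesis unfolding D_def Hq_diff[OF a0(1)] by (simp add: field_simps)
    qed
    finally show ?thesis .
  qed
  have "(\<Sum>j\<le>u. (-1) ^ j * of_nat (u choose j) * hq p (p ^ AA + p * a0 + 1 - j)) - (of_nat u - of_nat (u - 1) * Hq (u - 1) + (1 - of_nat u) / of_nat a0) =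
        (\<Sum>j\<le>u. (-1) ^ j * of_nat (u choose j) * (hq p (p ^ AA + p * a0 + 1 - j) - v j))"
    unfolding sv[symmetric] by (simp add: sum_subtractf[symmetric] algebra_simps)
  moreover have "pc p 1 (\<Sum>j\<le>u. (-1) ^ j * of_nat (u choose j) * (hq p (p ^ AA + p * a0 + 1 - j) - v j))"
    using d by (intro pc_sum pc_mult_zp') auto
  ultimately show ?thesis by simp
qed

lemma pick:
  fixes x y :: int
  assumes p: "prime p" and x: "\<not> int p dvd x" and y: "\<not> int p dvd y"
  shows "\<exists>a0. 1 \<le> a0 \<and> a0 \<le> p - 1 \<and> pc p 1 (of_int x + of_int y / of_nat a0)"
proof -
  have pi: "prime (int p)" using p by simp
  have "coprime (int p) x" using prime_imp_coprime[OF pi x] .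
  then have g: "gcd x (int p) = 1" by (simp add: coprime_iff_gcd_eq_1 gcd.commute)
  obtain s t where st: "s * x + t * int p = 1" using bezout_int[of x "int p"] g by auto
  define a where "a = (- (y * s)) mod int p"
  have p0: "int p > 0" using p prime_gt_0_nat by simp
  have a_rng: "0 \<le> a" "a < int p" unfolding a_def using p0 by auto
  define q where "q = (- (y * s)) div int p"
  have aq: "a = - (y * s) - int p * q" unfolding a_def q_def by (simp add: minus_div_mult_eq_mod[symmetric])
  have dv: "int p dvd x * a + y"
  proof -
    have e1: "1 - s * x = t * int p" using st by linarith
    have "x * a + y = y * (1 - s * x) - int p * (x * q)" unfolding aq by (simp add: algebra_simps)
    also have "\<dots> = int p * (y * t - x * q)" unfolding e1 by (simp add: algebra_simps)
    finally show ?thesis by simp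
  qed
  have an: "a \<noteq> 0"
  proof
    assume "a = 0"
    then have "int p dvd x * 0 + y" using dv by simp
    then show False using y by simp
  qed
  define a0 where "a0 = nat a"
  have a0: "1 \<le> a0" "a0 \<le> p - 1" "int a0 = a" unfolding a0_def using a_rng an by auto
  obtain c where c: "x * a + y = int p * c" using dv by auto
  have "(of_int x + of_int y / of_nat a0 :: rat) = of_nat p ^ 1 * (of_int c * (1 / of_nat a0))"
  proof -
    have "(of_nat a0 :: rat) = of_int a" using a0(3) by (metis of_int_of_nat_eq)
    moreover have "(of_int a :: rat) \<noteq> 0" using an by simp
    moreover have "(of_int x * of_int a + of_int y :: rat) = of_nat p * of_int c"
      using c by (metis of_int_add of_int_mult of_int_of_nat_eq)
    ultimately show ?thesis by (simp add: field_simps)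
  qed
  moreover have "zp p (of_int c * (1 / of_nat a0))"
    using a0 p by (intro zp_mult zp_int zp_inv_nat) auto
  ultimately have "pc p 1 (of_int x + of_int y / of_nat a0)" unfolding pc_def by blast
  then show ?thesis using a0 by blast
qed

lemma choose_t:
  assumes p: "prime p" "p \<ge> 3" and u: "2 \<le> u" "u \<le> p - 1"
  shows "\<exists>t a0. t \<le> 1 \<and> 1 \<le> a0 \<and> a0 \<le> p - 1 \<and>
     (\<forall>AA\<ge>2. pc p 1 (\<Sum>j\<le>u. (-1) ^ j * of_nat (u choose j) * hq p (p ^ AA + p * a0 + t - j)))"
proof (cases "pc p 1 (Hq (u - 1))")
  case False
  have "zp p (Hq (u - 1))" using zp_Hq[OF p(1)] u by auto
  then obtain x y where xy: "Hq (u - 1) = of_int x / of_int y" "y \<noteq> 0" "coprime y (int p)" "\<not> int p dvd x"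
    using zp_not_pc_rep[OF _ False p(1)] by blast
  have ny: "\<not> int p dvd y"
  proof
    assume "int p dvd y"
    then have "int p dvd 1" using xy(3) by (metis coprime_common_divisor dvd_refl)
    then show False using p by simp
  qed
  obtain a0 where a0: "1 \<le> a0" "a0 \<le> p - 1" "pc p 1 (of_int x + of_int y / of_nat a0)"
    using pick[OF p(1) xy(4) ny] by blast
  have zy: "zp p (1 / of_int y)" unfolding zp_def using xy by (intro exI[of _ 1] exI[of _ y]) auto
  have "1 / of_nat a0 + Hq (u - 1) = (of_int x + of_int y / of_nat a0) * (1 / of_int y)"
    using xy(1,2) by (simp add: field_simps)
  then have E: "pc p 1 (1 / of_nat a0 + Hq (u - 1))" using pc_mult_zp[OF a0(3) zy] by simp
  have "\<forall>AA\<ge>2. pc p 1 (\<Sum>j\<le>u. (-1) ^ j * of_nat (u choose j) * hq p (p ^ AA + p * a0 + 0 - j))"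
  proof (intro allI impI)
    fix AA :: nat assume "AA \<ge> 2"
    then have "pc p 1 ((\<Sum>j\<le>u. (-1) ^ j * of_nat (u choose j) * hq p (p ^ AA + p * a0 - j)) - (1 / of_nat a0 + Hq (u - 1)))"
      using T_t0[OF p _ u(2) _ a0(1,2)] u by auto
    then have "pc p 1 (((\<Sum>j\<le>u. (-1) ^ j * of_nat (u choose j) * hq p (p ^ AA + p * a0 - j)) - (1 / of_nat a0 + Hq (u - 1))) + (1 / of_nat a0 + Hq (u - 1)))"
      using E by (rule pc_add)
    then show "pc p 1 (\<Sum>j\<le>u. (-1) ^ j * of_nat (u choose j) * hq p (p ^ AA + p * a0 + 0 - j))"
      by simp
  qed
  then show ?thesis using a0 by blast
next
  case True
  have "\<not> p dvd u" using u nat_dvd_not_less[of u p] by auto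
  then have nu: "\<not> int p dvd int u" by (simp add: int_dvd_int_iff)
  have nu1: "\<not> int p dvd (1 - int u)"
  proof
    assume "int p dvd (1 - int u)"
    moreover have "1 - int u = - int (u - 1)" using u by simp
    ultimately have "int p dvd int (u - 1)" by (metis dvd_minus_iff)
    then have "p dvd (u - 1)" by (simp add: int_dvd_int_iff)
    moreover have "0 < u - 1" "u - 1 < p" using u by auto
    ultimately show False using nat_dvd_not_less by blast
  qed
  obtain a0 where a0: "1 \<le> a0" "a0 \<le> p - 1" "pc p 1 (of_int (int u) + of_int (1 - int u) / of_nat a0)"
    using pick[OF p(1) nu nu1] by blast
  have E0: "pc p 1 (of_nat u + (1 - of_nat u) / of_nat a0)" using a0(3) by simp
  have E1: "pc p 1 (of_nat (u - 1) * Hq (u - 1))" using True by (intro pc_mult_zp') auto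
  have "\<forall>AA\<ge>2. pc p 1 (\<Sum>j\<le>u. (-1) ^ j * of_nat (u choose j) * hq p (p ^ AA + p * a0 + 1 - j))"
  proof (intro allI impI)
    fix AA :: nat assume "AA \<ge> 2"
    then have D: "pc p 1 ((\<Sum>j\<le>u. (-1) ^ j * of_nat (u choose j) * hq p (p ^ AA + p * a0 + 1 - j))
           - (of_nat u - of_nat (u - 1) * Hq (u - 1) + (1 - of_nat u) / of_nat a0))"
      using T_t1[OF p _ u(2) _ a0(1,2)] u by auto
    have "(\<Sum>j\<le>u. (-1) ^ j * of_nat (u choose j) * hq p (p ^ AA + p * a0 + 1 - j)) =
      ((\<Sum>j\<le>u. (-1) ^ j * of_nat (u choose j) * hq p (p ^ AA + p * a0 + 1 - j))
           - (of_nat u - of_nat (u - 1) * Hq (u - 1) + (1 - of_nat u) / of_nat a0))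
      + (of_nat u + (1 - of_nat u) / of_nat a0) - of_nat (u - 1) * Hq (u - 1)" by simp
    moreover have "pc p 1 (((\<Sum>j\<le>u. (-1) ^ j * of_nat (u choose j) * hq p (p ^ AA + p * a0 + 1 - j))
           - (of_nat u - of_nat (u - 1) * Hq (u - 1) + (1 - of_nat u) / of_nat a0))
      + (of_nat u + (1 - of_nat u) / of_nat a0) - of_nat (u - 1) * Hq (u - 1))"
      by (intro pc_diff pc_add D E0 E1)
    ultimately show "pc p 1 (\<Sum>j\<le>u. (-1) ^ j * of_nat (u choose j) * hq p (p ^ AA + p * a0 + 1 - j))"
      by simp
  qed
  then show ?thesis using a0 by blast
qed

lemma dvd_A:
  assumes p: "prime p" "p \<ge> 3" and u: "2 \<le> u" "u \<le> p - 1" and s: "s \<ge> 1"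
    and t: "t \<le> 1" and a0: "1 \<le> a0" "a0 \<le> p - 1" and AA: "AA \<ge> 2"
    and T: "pc p 1 (\<Sum>j\<le>u. (-1) ^ j * of_nat (u choose j) * hq p (p ^ AA + p * a0 + t - j))"
  shows "int p * int p dvd A p ((p - 1) * (u * p ^ s - 1)) (p ^ s * (p ^ AA + p * a0 + t))"
proof -
  have p2: "p \<ge> 2" using p by auto
  have odd: "odd p" using p prime_odd_nat by auto
  define w where "w = u * p ^ s"
  define q where "q = p ^ AA + p * a0 + t"
  define n where "n = p ^ s * q"
  have uq: "u \<le> q"
  proof -
    have "p \<le> p ^ AA" using AA p2 by (metis One_nat_def Suc_1 Suc_le_lessD le_trans less_imp_le_nat power_increasing power_one_right)
    then show ?thesis unfolding q_def using u by linarith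
  qed
  have nw: "n \<ge> w" unfolding n_def w_def using uq by (simp add: mult.commute)
  have w1: "w \<ge> 1" unfolding w_def using u p2 by simp
  have pw: "int p dvd int w" unfolding w_def using s by (simp add: int_dvd_int_iff dvd_power)
  define Y where "Y = ((1 - fps_X) ^ w * (\<Prod>i\<le>n. (1 - fps_X ^ (p ^ i) :: int fps)) ^ (p - 1)) $ n"
  have C1: "int p * int p dvd A p ((p - 1) * (w - 1)) n - Y"
    unfolding Y_def using main_cong[OF p(1) odd w1 pw] .
  have C2: "pc p 2 (of_int Y + of_nat p * (\<Sum>j\<le>u. (-1) ^ j * of_nat (u choose j) * hq p (n - p ^ s * j)))"
    unfolding Y_def using Y_cong[OF p(1) odd _ s w_def nw] u by simp
  have "(\<Sum>j\<le>u. (-1) ^ j * of_nat (u choose j) * hq p (n - p ^ s * j)) =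
        (\<Sum>j\<le>u. (-1) ^ j * of_nat (u choose j) * hq p (q - j))"
  proof (intro sum.cong refl)
    fix j assume "j \<in> {..u}"
    then have "n - p ^ s * j = p ^ s * (q - j)" unfolding n_def by (simp add: diff_mult_distrib2)
    then show "(-1) ^ j * of_nat (u choose j) * hq p (n - p ^ s * j) = (-1) ^ j * of_nat (u choose j) * hq p (q - j)"
      using hq_pow[OF p2] by simp
  qed
  then have "pc p 1 (\<Sum>j\<le>u. (-1) ^ j * of_nat (u choose j) * hq p (n - p ^ s * j))"
    using T unfolding q_def by simp
  then have "pc p 2 (of_nat p * (\<Sum>j\<le>u. (-1) ^ j * of_nat (u choose j) * hq p (n - p ^ s * j)))"
    using pc_p_times2 by (simp add: numeral_2_eq_2)
  then have "pc p 2 ((of_int Y + of_nat p * (\<Sum>j\<le>u. (-1) ^ j * of_nat (u choose j) * hq p (n - p ^ s * j)))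
              - of_nat p * (\<Sum>j\<le>u. (-1) ^ j * of_nat (u choose j) * hq p (n - p ^ s * j)))"
    using C2 by (intro pc_diff)
  then have "pc p 2 (of_int Y)" by simp
  then have "int p ^ 2 dvd Y" using pc_int_dvd[OF p(1)] by blast
  then have "int p * int p dvd Y" by (simp add: power2_eq_square)
  then have "int p * int p dvd A p ((p - 1) * (w - 1)) n" using C1 by (metis dvd_diff_commute dvd_add_right_iff diff_add_cancel)
  then show ?thesis unfolding w_def n_def q_def .
qed

theorem theorem3p1:
  fixes p u s :: nat
  assumes "prime p" and "p \<ge> 3" and "u \<in> {2..p-1}" and "s \<ge> 1"
  shows "infinite {n::nat. nu p (A p ((p - 1) * (u * p ^ s - 1)) n) \<ge> 2}"
proof -
  have u: "2 \<le> u" "u \<le> p - 1" using assms(3) by auto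
  have p2: "p \<ge> 2" using assms by auto
  obtain t a0 where ta: "t \<le> 1" "1 \<le> a0" "a0 \<le> p - 1"
    and T: "\<forall>AA\<ge>2. pc p 1 (\<Sum>j\<le>u. (-1) ^ j * of_nat (u choose j) * hq p (p ^ AA + p * a0 + t - j))"
    using choose_t[OF assms(1,2) u] by blast
  define f where "f AA = p ^ s * (p ^ (AA + 2) + p * a0 + t)" for AA
  have fin: "f AA \<in> {n::nat. nu p (A p ((p - 1) * (u * p ^ s - 1)) n) \<ge> 2}" for AA
  proof -
    have d: "int p * int p dvd A p ((p - 1) * (u * p ^ s - 1)) (f AA)"
    proof -
      have "AA + 2 \<ge> 2" by simp
      then have "pc p 1 (\<Sum>j\<le>u. (-1) ^ j * of_nat (u choose j) * hq p (p ^ (AA + 2) + p * a0 + t - j))"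
        using T by blast
      from dvd_A[OF assms(1,2) u assms(4) ta \<open>AA + 2 \<ge> 2\<close> this]
      show ?thesis unfolding f_def .
    qed
    show ?thesis
    proof (cases "A p ((p - 1) * (u * p ^ s - 1)) (f AA) = 0")
      case True
      then show ?thesis by (simp add: nu_def)
    next
      case False
      have "\<not> is_unit (int p)" using assms(1) p2 by simp
      moreover have "int p ^ 2 dvd A p ((p - 1) * (u * p ^ s - 1)) (f AA)" using d by (simp add: power2_eq_square)
      ultimately have "multiplicity (int p) (A p ((p - 1) * (u * p ^ s - 1)) (f AA)) \<ge> 2"
        using multiplicity_geI False by blast
      then show ?thesis using False by (simp add: nu_def)
    qed
  qed
  have "strict_mono f"
    unfolding strict_mono_def f_def using p2 by (auto intro!: mult_strict_left_mono power_strict_increasing)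
  then have "inj f" by (rule strict_mono_imp_inj_on)
  then have "infinite (range f)" using finite_imageD by blast
  moreover have "range f \<subseteq> {n::nat. nu p (A p ((p - 1) * (u * p ^ s - 1)) n) \<ge> 2}" using fin by blast
  ultimately show ?thesis using infinite_super by blast
qed

end
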